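(* In a pairing heap, insertion takes $O(1)$ amortized time with respect to the potential $\Phi$.
   Context: A pairing heap is a heap-ordered rooted ordered tree (the "general view"): each node stores a key, has zero or more children ordered from left to right, and every child has a strictly larger key than its parent. It is stored in the "binary view" via the leftmost-child/right-sibling correspondence: the left child of $x$ in the binary view is the leftmost child of $x$ in the general view, and the right child of $x$ in the binary view is the next sibling to the right of $x$ in the general view. Pairing two heap-ordered trees makes the root with the larger key the leftmost child of the other root. Operations: make-heap returns an empty heap; get-min returns the root key; insert creates a new node, which becomes the root if the heap is empty and otherwise is paired with the root; decrease-key$(p,y)$ (with $y$ strictly less than the current key of the node $p$) sets the key to $y$ and, if the node is not the root, detaches it (with its general-view subtree) from its parent and pairs it with the root; delete-min removes the root, then (first pass) pairs the root's former children in consecutive pairs from left to right, then (second pass) repeatedly pairs the two rightmost remaining trees until one tree remains. The actual cost of an operation is $1$ plus the number of pairings it performs, and its amortized cost is its actual cost plus the resulting change in $\Phi$. The heap is assumed to arise from a sequence of such operations starting from an empty heap. Sticky size: $N$ is initially $1$; after every heap operation, if $n \ge 2N$ then $N$ is doubled, and if $n \le N/2$ then $N$ is halved, where $n$ is the current number of elements. Let $\lg = \log_2$. For a node $x$, $|x|$ is the number of nodes in the subtree rooted at $x$ in the binary view, and $x_L$, $x_R$ are its left and right children in the binary view (a missing child has size $0$). Node potential $\phi_x$: if $|x_L| > \lg N$ and $|x_R| > \lg N$, $x$ is large and $\phi_x = 400 + 100\lg|x|$; if $|x_L| \le \lg N < |x_R|$, $x$ is mixed and $\phi_x = 400 + 100\frac{|x_L|}{\lg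 N}\lg|x|$ (symmetrically, if $|x_R| \le \lg N < |x_L|$, $\phi_x = 400 + 100\frac{|x_R|}{\lg N}\lg|x|$); if both $|x_L|,|x_R| \le \lg N$, $x$ is small and $\phi_x = 0$. Edge potential: an edge of the binary view joining a large node to its right child that is also large has potential $-7$; all other edges have potential $0$. $\Phi = 900|N-n| + \sum_x \phi_x + (\text{sum of edge potentials})$. *)

theory Defs
  imports Complex_Main
begin

text \<open>Binary view of a pairing heap: Node left id key right, where left is the
leftmost child and right is the next sibling (general view).  Each node carries
a unique identifier (the "pointer" used by decrease-key) and a key.
A heap is represented by the binary view of its root (whose right child is Leaf);
the empty heap is Leaf.\<close>

datatype 'k tree = Leaf | Node "'k tree" nat 'k "'k tree"

fun bsize :: "'k tree \<Rightarrow> nat" where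
  "bsize Leaf = 0"
| "bsize (Node l i k r) = bsize l + 1 + bsize r"

fun ids :: "'k tree \<Rightarrow> nat set" where
  "ids Leaf = {}"
| "ids (Node l i k r) = insert i (ids l \<union> ids r)"

fun lookup :: "nat \<Rightarrow> 'k tree \<Rightarrow> 'k option" where
  "lookup p Leaf = None"
| "lookup p (Node l i k r) =
     (if i = p then Some k else (case lookup p l of Some x \<Rightarrow> Some x | None \<Rightarrow> lookup p r))"

text \<open>Pairing of two heap-ordered trees (given by their roots, right child Leaf):
the root with the larger key becomes the leftmost child of the other root.
Ties: the first argument stays the root.\<close>
fun link :: "'k::linorder tree \<Rightarrow> 'k tree \<Rightarrow> 'k tree" where
  "link (Node l1 i1 k1 r1) (Node l2 i2 k2 r2) =
     (if k1 \<le> k2 then Node (Node l2 i2 k2 l1) i1 k1 Leaf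
      else Node (Node l1 i1 k1 l2) i2 k2 Leaf)"
| "link Leaf t = t"
| "link t Leaf = t"

text \<open>Operations return the new heap and the number of pairings performed.\<close>

definition ins :: "nat \<Rightarrow> 'k::linorder \<Rightarrow> 'k tree \<Rightarrow> 'k tree \<times> nat" where
  "ins i k h = (if h = Leaf then (Node Leaf i k Leaf, 0) else (link h (Node Leaf i k Leaf), 1))"

fun siblings :: "'k tree \<Rightarrow> 'k tree list" where
  "siblings Leaf = []"
| "siblings (Node l i k r) = Node l i k Leaf # siblings r"

fun pass1 :: "'k::linorder tree list \<Rightarrow> 'k tree list \<times> nat" where
  "pass1 (a # b # rest) = (let (ts, c) = pass1 rest in (link a b # ts, c + 1))"
| "pass1 [a] = ([a], 0)"
| "pass1 [] = ([], 0)"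

fun pass2 :: "'k::linorder tree list \<Rightarrow> 'k tree \<times> nat" where
  "pass2 [] = (Leaf, 0)"
| "pass2 [t] = (t, 0)"
| "pass2 (t # ts) = (let (u, c) = pass2 ts in (link t u, c + 1))"

fun delmin :: "'k::linorder tree \<Rightarrow> 'k tree \<times> nat" where
  "delmin Leaf = (Leaf, 0)"
| "delmin (Node l i k r) =
     (let (ts, c1) = pass1 (siblings l); (t, c2) = pass2 ts in (t, c1 + c2))"

fun detach :: "nat \<Rightarrow> 'k tree \<Rightarrow> 'k tree \<times> 'k tree option" where
  "detach p Leaf = (Leaf, None)"
| "detach p (Node l i k r) =
     (if i = p then (r, Some (Node l i k Leaf))
      else (case detach p l of
              (l', Some x) \<Rightarrow> (Node l' i k r, Some x)
            | (_, None) \<Rightarrow> (case detach p r of (r', s) \<Rightarrow> (Node l i k r', s))))"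

fun deckey :: "nat \<Rightarrow> 'k::linorder \<Rightarrow> 'k tree \<Rightarrow> 'k tree \<times> nat" where
  "deckey p y Leaf = (Leaf, 0)"
| "deckey p y (Node l i k r) =
     (if i = p then (Node l i y r, 0)
      else (case detach p l of
              (l', Some (Node lx ix kx rx)) \<Rightarrow> (link (Node l' i k r) (Node lx ix y Leaf), 1)
            | _ \<Rightarrow> (Node l i k r, 0)))"

text \<open>Sticky size update after an operation (N stays a power of 2, N \<ge> 1).\<close>
definition sticky :: "nat \<Rightarrow> nat \<Rightarrow> nat" where
  "sticky n N = (if n \<ge> 2 * N then 2 * N else if 2 * n \<le> N \<and> N \<ge> 2 then N div 2 else N)"

inductive reach :: "'k::linorder tree \<Rightarrow> nat \<Rightarrow> bool" where
  init: "reach Leaf 1"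
| insert: "reach h N \<Longrightarrow> i \<notin> ids h \<Longrightarrow>
      reach (fst (ins i k h)) (sticky (bsize (fst (ins i k h))) N)"
| getmin: "reach h N \<Longrightarrow> h \<noteq> Leaf \<Longrightarrow> reach h (sticky (bsize h) N)"
| deletemin: "reach h N \<Longrightarrow> h \<noteq> Leaf \<Longrightarrow>
      reach (fst (delmin h)) (sticky (bsize (fst (delmin h))) N)"
| decreasekey: "reach h N \<Longrightarrow> lookup p h = Some x \<Longrightarrow> y < x \<Longrightarrow>
      reach (fst (deckey p y h)) (sticky (bsize (fst (deckey p y h))) N)"

definition is_large :: "real \<Rightarrow> 'k tree \<Rightarrow> bool" where
  "is_large lgN t = (case t of Leaf \<Rightarrow> False
     | Node l i k r \<Rightarrow> real (bsize l) > lgN \<and> real (bsize r) > lgN)"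

fun node_phi :: "real \<Rightarrow> 'k tree \<Rightarrow> real" where
  "node_phi lgN Leaf = 0"
| "node_phi lgN (Node l i k r) =
     (let a = real (bsize l); b = real (bsize r); s = real (bsize (Node l i k r)) in
      if a > lgN \<and> b > lgN then 400 + 100 * log 2 s
      else if a \<le> lgN \<and> lgN < b then 400 + 100 * (a / lgN) * log 2 s
      else if b \<le> lgN \<and> lgN < a then 400 + 100 * (b / lgN) * log 2 s
      else 0)"

fun sum_phi :: "real \<Rightarrow> 'k tree \<Rightarrow> real" where
  "sum_phi lgN Leaf = 0"
| "sum_phi lgN (Node l i k r) = node_phi lgN (Node l i k r) + sum_phi lgN l + sum_phi lgN r"

fun sum_edge :: "real \<Rightarrow> 'k tree \<Rightarrow> real" where
  "sum_edge lgN Leaf = 0"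
| "sum_edge lgN (Node l i k r) =
     (if is_large lgN (Node l i k r) \<and> is_large lgN r then -7 else 0)
     + sum_edge lgN l + sum_edge lgN r"

definition Phi :: "'k tree \<Rightarrow> nat \<Rightarrow> real" where
  "Phi h N = (let lgN = log 2 (real N) in
     900 * \<bar>real N - real (bsize h)\<bar> + sum_phi lgN h + sum_edge lgN h)"

definition insert_amortized :: "nat \<Rightarrow> 'k::linorder \<Rightarrow> 'k tree \<Rightarrow> nat \<Rightarrow> real" where
  "insert_amortized i k h N = (let (h', c) = ins i k h; N' = sticky (bsize h') N in
     real (1 + c) + Phi h' N' - Phi h N)"

end

theory Submission
  imports Defs
begin

fun root_ok :: "'k tree \<Rightarrow> bool" where
  "root_ok Leaf = True"
| "root_ok (Node l i k r) = (r = Leaf)"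

lemma link_ok:
  assumes "root_ok a" "root_ok b"
  shows "root_ok (link a b) \<and> bsize (link a b) = bsize a + bsize b"
  using assms by (cases a; cases b) auto

lemma pass1_ok:
  "\<forall>t\<in>set ts. root_ok t \<Longrightarrow>
   (\<forall>t\<in>set (fst (pass1 ts)). root_ok t) \<and>
   sum_list (map bsize (fst (pass1 ts))) = sum_list (map bsize ts)"
proof (induction ts rule: pass1.induct)
  case (1 a b rest)
  obtain ts c where p: "pass1 rest = (ts, c)" by fastforce
  from 1 p link_ok[of a b] show ?case by (auto simp: Let_def)
qed auto

lemma pass2_ok:
  "\<forall>t\<in>set ts. root_ok t \<Longrightarrow>
   root_ok (fst (pass2 ts)) \<and> bsize (fst (pass2 ts)) = sum_list (map bsize ts)"
proof (induction ts rule: pass2.induct)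
  case (3 t v va)
  obtain u c where p: "pass2 (v # va) = (u, c)" by fastforce
  from 3 p link_ok[of t u] show ?case by (auto simp: Let_def)
qed auto

lemma siblings_ok:
  "(\<forall>t\<in>set (siblings h). root_ok t) \<and> sum_list (map bsize (siblings h)) = bsize h"
  by (induction h) auto

lemma delmin_ok:
  assumes "root_ok h" "h \<noteq> Leaf"
  shows "root_ok (fst (delmin h)) \<and> bsize (fst (delmin h)) + 1 = bsize h"
proof -
  obtain l i k where h: "h = Node l i k Leaf" using assms by (cases h) auto
  obtain ts c1 where p1: "pass1 (siblings l) = (ts, c1)" by fastforce
  obtain t c2 where p2: "pass2 ts = (t, c2)" by fastforce
  have a: "(\<forall>t\<in>set ts. root_ok t) \<and> sum_list (map bsize ts) = bsize l"
    using pass1_ok[of "siblings l"] siblings_ok[of l] p1 by auto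
  have b: "root_ok t \<and> bsize t = bsize l" using pass2_ok[of ts] a p2 by auto
  show ?thesis using b h p1 p2 by auto
qed

lemma detach_ok:
  "detach p t = (t', s) \<Longrightarrow> (s = None \<longrightarrow> t' = t) \<and>
     (\<forall>x. s = Some x \<longrightarrow> bsize t' + bsize x = bsize t \<and> root_ok x)"
proof (induction t arbitrary: t' s)
  case Leaf
  then show ?case by auto
next
  case (Node l i k r)
  show ?case
  proof (cases "i = p")
    case True
    then show ?thesis using Node.prems by auto
  next
    case False
    obtain l' s1 where d1: "detach p l = (l', s1)" by fastforce
    obtain r' s2 where d2: "detach p r = (r', s2)" by fastforce
    show ?thesis
    proof (cases s1)
      case None
      then show ?thesis using Node.prems Node.IH(2)[OF d2] False d1 d2 by auto
    next
      case (Some x)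
      then show ?thesis using Node.prems Node.IH(1)[OF d1] False d1 by auto
    qed
  qed
qed

lemma deckey_ok:
  assumes "root_ok h"
  shows "root_ok (fst (deckey p y h)) \<and> bsize (fst (deckey p y h)) = bsize h"
proof (cases h)
  case Leaf
  then show ?thesis by auto
next
  case (Node l i k r)
  have r: "r = Leaf" using assms Node by auto
  show ?thesis
  proof (cases "i = p")
    case True
    then show ?thesis using Node r by auto
  next
    case False
    obtain l' s where d: "detach p l = (l', s)" by fastforce
    note D = detach_ok[OF d]
    show ?thesis
    proof (cases s)
      case None
      then show ?thesis using Node r False d by auto
    next
      case (Some x)
      show ?thesis
      proof (cases x)
        case Leaf
        then show ?thesis using Node r False d Some by auto
      next
        case (Node lx ix kx rx)
        have "rx = Leaf" using D Some Node by auto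
        then show ?thesis using \<open>h = _\<close> r False d Some Node D by auto
      qed
    qed
  qed
qed

definition pinv :: "'k tree \<Rightarrow> nat \<Rightarrow> bool" where
  "pinv h N = (root_ok h \<and> N \<ge> 1 \<and> bsize h < 2 * N \<and> (N \<ge> 2 \<longrightarrow> N < 2 * bsize h))"

lemma sticky_inv:
  assumes "N \<ge> 1" "n < 2 * N" "N \<ge> 2 \<longrightarrow> N < 2 * n" "n' \<le> n + 1" "n + 1 \<le> n' + 2"
  shows "sticky n' N \<ge> 1 \<and> n' < 2 * sticky n' N \<and> (sticky n' N \<ge> 2 \<longrightarrow> sticky n' N < 2 * n')"
  using assms unfolding sticky_def by (auto; presburger)

lemma reach_inv: "reach h N \<Longrightarrow> pinv h N"
proof (induction rule: reach.induct)
  case init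
  then show ?case by (auto simp: pinv_def)
next
  case (insert h N i k)
  have ok: "root_ok (fst (ins i k h)) \<and> bsize (fst (ins i k h)) = bsize h + 1"
    using insert link_ok[of h "Node Leaf i k Leaf"] by (auto simp: ins_def pinv_def)
  then show ?case using insert sticky_inv[of N "bsize h" "bsize (fst (ins i k h))"]
    by (auto simp: pinv_def)
next
  case (getmin h N)
  then show ?case using sticky_inv[of N "bsize h" "bsize h"] by (auto simp: pinv_def)
next
  case (deletemin h N)
  have ok: "root_ok (fst (delmin h)) \<and> bsize (fst (delmin h)) + 1 = bsize h"
    using deletemin delmin_ok by (auto simp: pinv_def)
  then show ?case using deletemin sticky_inv[of N "bsize h" "bsize (fst (delmin h))"]
    by (auto simp: pinv_def)
next
  case (decreasekey h N p x y)
  have ok: "root_ok (fst (deckey p y h)) \<and> bsize (fst (deckey p y h)) = bsize h"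
    using decreasekey deckey_ok by (auto simp: pinv_def)
  then show ?case using decreasekey sticky_inv[of N "bsize h" "bsize (fst (deckey p y h))"]
    by (auto simp: pinv_def)
qed


lemma node_phi_nonneg: "0 \<le> L \<Longrightarrow> 0 \<le> node_phi L t"
  by (cases t) (auto simp: Let_def)

lemma sum_phi_nonneg: "0 \<le> L \<Longrightarrow> 0 \<le> sum_phi L t"
  by (induction t) (auto simp: node_phi_nonneg simp del: node_phi.simps)

lemma frac_mono:
  fixes a L L' g :: real
  assumes "0 \<le> L" "L \<le> L'" "0 \<le> a" "a \<le> L" "0 \<le> g"
  shows "(a / L') * g \<le> (a / L) * g"
proof (cases "L = 0")
  case True
  then show ?thesis using assms by simp
next
  case False
  then have "a / L' \<le> a / L" using assms by (intro divide_left_mono) auto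
  then show ?thesis using assms by (intro mult_right_mono) auto
qed

lemma frac_le1:
  fixes a L g :: real
  assumes "0 \<le> L" "0 \<le> a" "a \<le> L" "0 \<le> g"
  shows "(a / L) * g \<le> g"
proof (cases "L = 0")
  case True
  then show ?thesis using assms by simp
next
  case False
  then have "a / L \<le> 1" using assms by simp
  then show ?thesis using assms mult_right_mono[of "a/L" 1 g] by auto
qed

lemma node_phi_mono:
  assumes "0 \<le> L" "L \<le> L'"
  shows "node_phi L' t \<le> node_phi L t"
proof (cases t)
  case Leaf
  then show ?thesis by simp
next
  case (Node l i k r)
  define a where "a = real (bsize l)"
  define b where "b = real (bsize r)"
  define g where "g = log 2 (real (bsize (Node l i k r)))"
  have g: "0 \<le> g" unfolding g_def by simp
  have a0: "0 \<le> a" and b0: "0 \<le> b" by (auto simp: a_def b_def)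
  have fa: "a \<le> L \<Longrightarrow> (a / L') * g \<le> (a / L) * g" using frac_mono[OF assms a0 _ g] by simp
  have fb: "b \<le> L \<Longrightarrow> (b / L') * g \<le> (b / L) * g" using frac_mono[OF assms b0 _ g] by simp
  have ga: "a \<le> L' \<Longrightarrow> (a / L') * g \<le> g" using frac_le1[of L' a g] assms a0 g by simp
  have gb: "b \<le> L' \<Longrightarrow> (b / L') * g \<le> g" using frac_le1[of L' b g] assms b0 g by simp
  have nn: "0 \<le> node_phi L t" using node_phi_nonneg assms by auto
  show ?thesis using nn unfolding Node node_phi.simps Let_def a_def[symmetric] b_def[symmetric] g_def[symmetric]
    using fa fb ga gb assms g by (auto simp: mult.assoc)
qed

lemma sum_phi_mono: "0 \<le> L \<Longrightarrow> L \<le> L' \<Longrightarrow> sum_phi L' t \<le> sum_phi L t"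
proof (induction t)
  case (Node l i k r)
  then show ?case using node_phi_mono[of L L' "Node l i k r"]
    by (simp del: node_phi.simps)
qed simp

lemma sum_edge_le0: "sum_edge L t \<le> 0"
  by (induction t) auto

lemma sum_edge_ge: "- 7 * real (bsize t) \<le> sum_edge L t"
  by (induction t) auto

lemma phi_leftleaf: "0 \<le> L \<Longrightarrow> node_phi L (Node Leaf i k r) \<le> 400"
  by (auto simp: Let_def)

lemma phi_rightleaf: "0 \<le> L \<Longrightarrow> node_phi L (Node l i k Leaf) \<le> 400"
  by (auto simp: Let_def)

lemma ins_shape:
  assumes "T' = Node (Node Leaf i k l1) i1 k1 Leaf \<or> T' = Node (Node l1 i1 k1 Leaf) i k Leaf"
    "0 \<le> L"
  shows "sum_phi L T' \<le> 800 + sum_phi L l1 \<and> sum_edge L T' = sum_edge L l1"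
proof -
  have e: "sum_edge L T' = sum_edge L l1" using assms by (auto simp: is_large_def)
  have "sum_phi L T' \<le> 800 + sum_phi L l1"
    using assms(1)
  proof
    assume T: "T' = Node (Node Leaf i k l1) i1 k1 Leaf"
    have "node_phi L (Node (Node Leaf i k l1) i1 k1 Leaf) \<le> 400"
      by (rule phi_rightleaf[OF assms(2)])
    moreover have "node_phi L (Node Leaf i k l1) \<le> 400"
      by (rule phi_leftleaf[OF assms(2)])
    ultimately
    show ?thesis using T by (simp del: node_phi.simps)
  next
    assume T: "T' = Node (Node l1 i1 k1 Leaf) i k Leaf"
    have "node_phi L (Node (Node l1 i1 k1 Leaf) i k Leaf) \<le> 400"
      by (rule phi_rightleaf[OF assms(2)])
    moreover have "node_phi L (Node l1 i1 k1 Leaf) \<le> 400"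
      by (rule phi_rightleaf[OF assms(2)])
    ultimately
    show ?thesis using T by (simp del: node_phi.simps)
  qed
  then show ?thesis using e by simp
qed

theorem lemma2:
  "\<exists>C::real. \<forall>(h::'k::linorder tree) N i (k::'k).
     reach h N \<longrightarrow> i \<notin> ids h \<longrightarrow> insert_amortized i k h N \<le> C"
proof (intro exI[of _ 2000] allI impI)
  fix h :: "'k tree" and N i and k :: 'k
  assume "reach h N" "i \<notin> ids h"
  have I: "pinv h N" using reach_inv \<open>reach h N\<close> by blast
  show "insert_amortized i k h N \<le> 2000"
  proof (cases h)
    case Leaf
    then have N1: "N = 1" using I by (auto simp: pinv_def)
    show ?thesis using Leaf N1
      by (simp add: insert_amortized_def ins_def sticky_def Phi_def Let_def)
  next
    case (Node l1 i1 k1 r1)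
    then have r1: "r1 = Leaf" using I by (auto simp: pinv_def)
    define T' where "T' = link h (Node Leaf i k Leaf)"
    have insv: "ins i k h = (T', 1)" using Node by (simp add: ins_def T'_def)
    have shape: "T' = Node (Node Leaf i k l1) i1 k1 Leaf \<or> T' = Node (Node l1 i1 k1 Leaf) i k Leaf"
      using Node r1 by (auto simp: T'_def)
    have szT': "bsize T' = bsize l1 + 2" using shape by auto
    have szh: "bsize h = bsize l1 + 1" using Node r1 by simp
    define N' where "N' = sticky (bsize T') N"
    define L where "L = log 2 (real N)"
    define L' where "L' = log 2 (real N')"
    have N1: "N \<ge> 1" and nlt: "bsize h < 2 * N" and nge: "N \<ge> 2 \<longrightarrow> N < 2 * bsize h"
      using I by (auto simp: pinv_def)
    have L0: "0 \<le> L" using N1 by (simp add: L_def)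
    have am: "insert_amortized i k h N = 2 + Phi T' N' - Phi h N"
      by (simp add: insert_amortized_def insv N'_def)
    have P1: "sum_phi L' T' \<le> 800 + sum_phi L' l1 \<and> sum_edge L' T' = sum_edge L' l1"
      if "0 \<le> L'" using ins_shape[OF shape that] .
    have hphi: "sum_phi L l1 \<le> sum_phi L h"
      using Node r1 node_phi_nonneg[OF L0, of h] by (simp del: node_phi.simps)
    have hedge: "sum_edge L h = sum_edge L l1" using Node r1 by (simp add: is_large_def)
    have PhiT: "Phi T' N' = 900 * \<bar>real N' - real (bsize T')\<bar> + sum_phi L' T' + sum_edge L' T'"
      by (simp add: Phi_def L'_def Let_def)
    have Phih: "Phi h N = 900 * \<bar>real N - real (bsize h)\<bar> + sum_phi L h + sum_edge L h"
      by (simp add: Phi_def L_def Let_def)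
    consider (same) "N' = N" | (dbl) "N' = 2 * N" "bsize T' \<ge> 2 * N"
    proof (cases "2 * N \<le> bsize T'")
      case True
      then show ?thesis using that(2) unfolding N'_def sticky_def by simp
    next
      case False
      then have "\<not> (2 * bsize T' \<le> N \<and> 2 \<le> N)" using nge szT' szh by auto
      then show ?thesis using False that(1) unfolding N'_def sticky_def by (simp only: if_False if_P)
    qed
    then show ?thesis
    proof cases
      case same
      then have "L' = L" by (simp add: L_def L'_def)
      then have "sum_phi L T' \<le> 800 + sum_phi L l1" "sum_edge L T' = sum_edge L l1"
        using P1 L0 by auto
      moreover have "Phi T' N' = 900 * \<bar>real N' - real (bsize T')\<bar> + sum_phi L T' + sum_edge L T'"
        using PhiT \<open>L' = L\<close> by simp
      moreover have "\<bar>real N' - real (bsize T')\<bar> \<le> \<bar>real N - real (bsize h)\<bar> + 1"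
        using same szT' szh by auto
      ultimately show ?thesis using am Phih hphi hedge by (smt (verit))
    next
      case dbl
      have eq: "bsize T' = 2 * N" using dbl nlt szT' szh by auto
      have LL: "L' = L + 1" using dbl N1
        by (simp add: L_def L'_def log_mult)
      have P: "sum_phi L' T' \<le> 800 + sum_phi L' l1" "sum_edge L' T' = sum_edge L' l1"
        using P1 L0 LL by auto
      have m: "sum_phi L' l1 \<le> sum_phi L l1" using sum_phi_mono[OF L0, of L' l1] LL by simp
      have e1: "sum_edge L' l1 \<le> 0" by (rule sum_edge_le0)
      have e2: "- 7 * real (bsize l1) \<le> sum_edge L l1" by (rule sum_edge_ge)
      have a1: "\<bar>real N' - real (bsize T')\<bar> = 0" using eq dbl by simp
      have a2: "\<bar>real N - real (bsize h)\<bar> = real N - 1" using eq szT' szh by simp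
      have sz: "real (bsize l1) = 2 * real N - 2" using eq szT' by simp
      show ?thesis using am PhiT Phih hphi hedge P m e1 e2 a1 a2 sz N1 by simp
    qed
  qed
qed

end
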